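(* Let $s$ be a positive even integer and $\mathfrak{S}\subseteq(\mathbb{Z}/s\mathbb{Z})^2$. Let $$\mathcal{N}(\mathfrak{S})=\left\{\tfrac32(\alpha-\beta)+\beta \bmod s/2 \ :\ (\alpha,\beta)\in\mathfrak{S},\ \alpha\equiv\beta\pmod 2\right\},$$ and assume $\mathcal{N}(\mathfrak{S})$ is a complete set of residues modulo $s/2$. Then for every $N\in\mathbb{N}$ there exists a residue $r_{N,s}$ modulo $3s$ such that for every $b\in\mathbb{Z}$ with $b\equiv r_{N,s}\pmod{3s}$ and $a=\frac23(N-b)+b$ we have $N\equiv b\pmod 3$, $a\equiv b\pmod 2$, and $(a,b)\bmod s\in\mathfrak{S}$.
   Context: Since $s$ is even, the parity of a residue modulo $s$ is well defined, and for $\alpha\equiv\beta\pmod 2$ the quantity $\frac32(\alpha-\beta)+\beta$ is a well-defined residue modulo $s/2$. *)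

theory Defs
  imports "HOL-Number_Theory.Number_Theory"
begin

text \<open>Residues modulo s are represented by their canonical representatives in {0..<s};
  a subset of (Z/sZ)^2 is thus a subset of {0..<s} x {0..<s}.\<close>

definition NS :: "int \<Rightarrow> (int \<times> int) set \<Rightarrow> int set" where
  "NS s S = {(3 * ((\<alpha> - \<beta>) div 2) + \<beta>) mod (s div 2) | \<alpha> \<beta>.
              (\<alpha>, \<beta>) \<in> S \<and> [\<alpha> = \<beta>] (mod 2)}"

end

theory Submission
  imports Defs
begin

theorem lemma3p4:
  fixes s :: int and S :: "(int \<times> int) set"
  assumes "s > 0" and "even s"
    and "S \<subseteq> {0..<s} \<times> {0..<s}"
    and "NS s S = {0..<s div 2}"
  shows "\<forall>N::nat. \<exists>r::int. r \<in> {0..<3*s} \<and>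
           (\<forall>b::int. [b = r] (mod (3*s)) \<longrightarrow>
              (let a = 2 * ((int N - b) div 3) + b in
                 [int N = b] (mod 3) \<and> [a = b] (mod 2) \<and> (a mod s, b mod s) \<in> S))"
proof
  fix N :: nat
  define t where "t = s div 2"
  have st: "s = 2 * t" using assms(2) t_def by auto
  have tpos: "t > 0" using st assms(1) by auto
  have "int N mod t \<in> NS s S" using assms(4) tpos t_def by auto
  then obtain \<alpha> \<beta> where ab: "(\<alpha>, \<beta>) \<in> S" "[\<alpha> = \<beta>] (mod 2)"
      "(3 * ((\<alpha> - \<beta>) div 2) + \<beta>) mod t = int N mod t"
    unfolding NS_def t_def by auto
  define k where "k = (\<alpha> - \<beta>) div 2"
  have ak: "\<alpha> - \<beta> = 2 * k" using ab(2) k_def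
    by (metis cong_iff_dvd_diff dvd_mult_div_cancel)
  have "t dvd (int N - (3 * k + \<beta>))" using ab(3) k_def
    by (metis mod_eq_dvd_iff)
  then obtain q where q: "int N - (3 * k + \<beta>) = t * q" by blast
  have rng: "0 \<le> \<alpha>" "\<alpha> < s" "0 \<le> \<beta>" "\<beta> < s" using ab(1) assms(3) by auto
  define r where "r = (\<beta> + 2 * s * q) mod (3 * s)"
  show "\<exists>r::int. r \<in> {0..<3*s} \<and>
           (\<forall>b::int. [b = r] (mod (3*s)) \<longrightarrow>
              (let a = 2 * ((int N - b) div 3) + b in
                 [int N = b] (mod 3) \<and> [a = b] (mod 2) \<and> (a mod s, b mod s) \<in> S))"
  proof (intro exI conjI allI impI)
    show "r \<in> {0..<3*s}" using r_def assms(1) by auto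
    fix b assume hb: "[b = r] (mod (3*s))"
    have "[b = \<beta> + 2 * s * q] (mod (3*s))" using hb r_def
      by (simp add: cong_def)
    then have "(3*s) dvd (b - (\<beta> + 2 * s * q))"
      by (simp add: cong_iff_dvd_diff)
    then obtain j where j: "b - (\<beta> + 2 * s * q) = 3 * s * j" by blast
    have b1: "b = \<beta> + 4*t*q + 6*t*j" using j st by (simp add: algebra_simps)
    have n1: "int N = 3 * k + \<beta> + t*q" using q by simp
    have Nb: "int N - b = 3 * (k - t*q - 2*t*j)" unfolding b1 n1 by (simp add: algebra_simps)
    have d: "(int N - b) div 3 = k - t*q - 2*t*j" using Nb by simp
    have aval: "2 * ((int N - b) div 3) + b = \<alpha> + s * (q + j)"
      using d j ak st by (simp add: algebra_simps)
    have bval: "b = \<beta> + s * (2*q + 3*j)" using j by (simp add: algebra_simps)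
    have c1: "[int N = b] (mod 3)" using Nb by (simp add: cong_iff_dvd_diff)
    have c2: "[\<alpha> + s * (q + j) = b] (mod 2)" proof -
      have "\<alpha> + s * (q + j) - b = 2*((int N - b) div 3)" using aval by simp
      then show ?thesis by (simp add: cong_iff_dvd_diff)
    qed
    have am: "(\<alpha> + s * (q + j)) mod s = \<alpha>" using rng by simp
    have bm: "b mod s = \<beta>" using rng bval by simp
    show "let a = 2 * ((int N - b) div 3) + b in
                 [int N = b] (mod 3) \<and> [a = b] (mod 2) \<and> (a mod s, b mod s) \<in> S"
      unfolding Let_def aval using c1 c2 am bm ab(1) by simp
  qed
qed

end
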